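(* Let $\sigma(x)=\operatorname{sgn}(x)x^2$. Let $x_0,y_0$ be positive real numbers such that (i) $y_0$ is a rational number which is not a square in $\mathbb{Q}$; (ii) $x_0=a_0+b_0\sqrt{y_0}$ with $a_0\neq0$ and $|b_0|\geq1$ rational numbers; (iii) $y_0>x_0^2$. Then $(x_0,y_0)$ is $\sigma$-irrational. In particular $(-1+\sqrt2,2)$ is $\sigma$-irrational.
   Context: $h_\sigma(x,y)=(x+\sigma^{-1}(y),y)$, $v_\sigma(x,y)=(x,\sigma(x)+y)$. The $\sigma$-rational lines are the axes $Ox=\mathbb{R}\times\{0\}$, $Oy=\{0\}\times\mathbb{R}$, the sets $m(Ox)$ with $m$ in the monoid generated by $h_\sigma,v_\sigma$, and the sets $m(Oy)$ with $m$ in the monoid generated by $h_\sigma^{-1},v_\sigma^{-1}$; a point is $\sigma$-irrational if it lies on none of them. *)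

theory Defs
  imports Complex_Main
begin

type_synonym pt = "real \<times> real"

definition sgnsq :: "real \<Rightarrow> real" where
  "sgnsq x = sgn x * x ^ 2"

definition h_sigma :: "(real \<Rightarrow> real) \<Rightarrow> pt \<Rightarrow> pt" where
  "h_sigma \<sigma> = (\<lambda>(x, y). (x + inv \<sigma> y, y))"

definition v_sigma :: "(real \<Rightarrow> real) \<Rightarrow> pt \<Rightarrow> pt" where
  "v_sigma \<sigma> = (\<lambda>(x, y). (x, \<sigma> x + y))"

definition h_sigma_inv :: "(real \<Rightarrow> real) \<Rightarrow> pt \<Rightarrow> pt" where
  "h_sigma_inv \<sigma> = (\<lambda>(x, y). (x - inv \<sigma> y, y))"

definition v_sigma_inv :: "(real \<Rightarrow> real) \<Rightarrow> pt \<Rightarrow> pt" where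
  "v_sigma_inv \<sigma> = (\<lambda>(x, y). (x, y - \<sigma> x))"

inductive_set monoid_gen :: "('a \<Rightarrow> 'a) \<Rightarrow> ('a \<Rightarrow> 'a) \<Rightarrow> ('a \<Rightarrow> 'a) set"
  for f g :: "'a \<Rightarrow> 'a" where
  id_in: "id \<in> monoid_gen f g"
| f_step: "m \<in> monoid_gen f g \<Longrightarrow> f \<circ> m \<in> monoid_gen f g"
| g_step: "m \<in> monoid_gen f g \<Longrightarrow> g \<circ> m \<in> monoid_gen f g"

definition Ox :: "pt set" where "Ox = UNIV \<times> {0}"
definition Oy :: "pt set" where "Oy = {0} \<times> UNIV"

definition sigma_rational_lines :: "(real \<Rightarrow> real) \<Rightarrow> pt set set" where
  "sigma_rational_lines \<sigma> =
     {Ox, Oy}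
     \<union> {m ` Ox | m. m \<in> monoid_gen (h_sigma \<sigma>) (v_sigma \<sigma>)}
     \<union> {m ` Oy | m. m \<in> monoid_gen (h_sigma_inv \<sigma>) (v_sigma_inv \<sigma>)}"

definition sigma_irrational :: "(real \<Rightarrow> real) \<Rightarrow> pt \<Rightarrow> bool" where
  "sigma_irrational \<sigma> p \<longleftrightarrow> (\<forall>L \<in> sigma_rational_lines \<sigma>. p \<notin> L)"

end

theory Submission
  imports Defs "HOL-Computational_Algebra.Polynomial"
begin

definition ratp :: "complex poly \<Rightarrow> bool" where
  "ratp p \<longleftrightarrow> (\<forall>i. coeff p i \<in> \<rat>)"

lemma ratp_add: "ratp p \<Longrightarrow> ratp q \<Longrightarrow> ratp (p + q)"
  by (simp add: ratp_def Rats_add)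

lemma ratp_diff: "ratp p \<Longrightarrow> ratp q \<Longrightarrow> ratp (p - q)"
  by (simp add: ratp_def Rats_diff)

lemma ratp_mult: "ratp p \<Longrightarrow> ratp q \<Longrightarrow> ratp (p * q)"
  unfolding ratp_def coeff_mult by (auto intro!: Rats_sum Rats_mult)

lemma ratp_const: "c \<in> \<rat> \<Longrightarrow> ratp [:c:]"
  by (auto simp: ratp_def coeff_pCons split: nat.splits)

lemma ratp_pCons: "c \<in> \<rat> \<Longrightarrow> ratp p \<Longrightarrow> ratp (pCons c p)"
  by (auto simp: ratp_def coeff_pCons split: nat.splits)

lemma ratp_pCons_iff: "ratp (pCons c p) \<longleftrightarrow> c \<in> \<rat> \<and> ratp p"
  by (auto simp: ratp_def coeff_pCons split: nat.splits) 

lemma ratp_smult: "c \<in> \<rat> \<Longrightarrow> ratp p \<Longrightarrow> ratp (smult c p)"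
  by (simp add: ratp_def Rats_mult)

lemma ratp_power: "ratp p \<Longrightarrow> ratp (p ^ n)"
  proof (induction n)
  case 0 then show ?case by (auto simp: ratp_def coeff_1)
next
  case (Suc n) then show ?case using ratp_mult by simp
qed

lemma ratp_pcompose: "ratp p \<Longrightarrow> ratp q \<Longrightarrow> ratp (pcompose p q)"
proof (induction p rule: pCons_induct)
  case 0
  then show ?case by (simp add: ratp_def)
next
  case (pCons a p)
  then show ?case
    by (auto simp: pcompose_pCons ratp_pCons_iff intro!: ratp_add ratp_const ratp_mult)
qed

lemma ratp_sum: "(\<And>i. i \<in> A \<Longrightarrow> ratp (f i)) \<Longrightarrow> ratp (\<Sum>i\<in>A. f i)"
  by (induction A rule: infinite_finite_induct) (auto simp: ratp_def intro: Rats_add)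

lemma even_odd_decomp:
  assumes "ratp f"
  shows "\<exists>e g. ratp e \<and> ratp g \<and> (\<forall>z. poly f z = poly e (z^2) + z * poly g (z^2))"
  using assms
proof (induction f rule: pCons_induct)
  case 0
  then show ?case by (intro exI[of _ 0]) (auto simp: ratp_def)
next
  case (pCons a f)
  then obtain e g where eo: "ratp e" "ratp g" "\<forall>z. poly f z = poly e (z^2) + z * poly g (z^2)"
    by (auto simp: ratp_pCons_iff)
  show ?case
    apply (rule exI[of _ "pCons a g"], rule exI[of _ e])
    using eo pCons.prems by (auto simp: ratp_pCons_iff algebra_simps power2_eq_square)
qed



definition tnn :: "real \<Rightarrow> bool" where
  "tnn r \<longleftrightarrow> (\<exists>p. p \<noteq> 0 \<and> ratp p \<and> poly p (complex_of_real r) = 0 \<and>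
      (\<forall>c. poly p c = 0 \<longrightarrow> c \<in> \<real> \<and> 0 \<le> Re c))"

lemma tnn_nonneg: "tnn r \<Longrightarrow> 0 \<le> r"
  unfolding tnn_def by force

lemma tnn_0: "tnn 0"
  unfolding tnn_def
  by (rule exI[of _ "[:0,1:]"]) (auto intro!: ratp_pCons ratp_const)

lemma tnn_plus1: assumes "tnn r" shows "tnn (r + 1)"
proof -
  obtain p where p: "p \<noteq> 0" "ratp p" "poly p (complex_of_real r) = 0"
    "\<forall>c. poly p c = 0 \<longrightarrow> c \<in> \<real> \<and> 0 \<le> Re c"
    using assms unfolding tnn_def by blast
  define q where "q = pcompose p [:-1,1:]"
  have pq: "poly q c = poly p (c - 1)" for c
    by (simp add: q_def poly_pcompose)
  have "q \<noteq> 0" using p(1) by (simp add: q_def pcompose_eq_0_iff)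
  moreover have "ratp q" unfolding q_def
    by (intro ratp_pcompose p(2)) (auto intro!: ratp_pCons ratp_const)
  moreover have "poly q (complex_of_real (r+1)) = 0" using p(3) by (simp add: pq)
  moreover have "c \<in> \<real> \<and> 0 \<le> Re c" if "poly q c = 0" for c
  proof -
    have h: "c - 1 \<in> \<real> \<and> 0 \<le> Re (c - 1)" using p(4) that unfolding pq by blast
    then have "c = (c - 1) + 1" "0 \<le> Re c" by auto
    then show ?thesis using h by (metis Reals_1 Reals_add)
  qed
  ultimately show ?thesis unfolding tnn_def by blast
qed

lemma complex_sq_real_nonneg:
  fixes w :: complex
  assumes "w^2 \<in> \<real>" "0 \<le> Re (w^2)"
  shows "w \<in> \<real>"
proof -
  have "Im (w^2) = 0" using assms(1) by (simp add: complex_is_Real_iff)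
  then have "Re w = 0 \<or> Im w = 0" by (simp add: power2_eq_square) blast
  moreover have "Re (w^2) = (Re w)^2 - (Im w)^2" by (simp add: power2_eq_square)
  ultimately have "Im w = 0" using assms(2)
    by (smt (verit) power2_less_0 zero_less_power2)
  then show ?thesis by (simp add: complex_is_Real_iff)
qed



lemma ratp_lin: "a \<in> \<rat> \<Longrightarrow> b \<in> \<rat> \<Longrightarrow> ratp [:a, b:]"
  by (intro ratp_pCons ratp_const)

lemma ratp_x2: "ratp [:0, 0, 1:]"
  by (intro ratp_pCons ratp_const) auto

lemma tnn_h: assumes "tnn r" shows "tnn (r / (1 + sqrt r)^2)"
proof -
  obtain p where p: "p \<noteq> 0" "ratp p" "poly p (complex_of_real r) = 0"
    "\<forall>c. poly p c = 0 \<longrightarrow> c \<in> \<real> \<and> 0 \<le> Re c"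
    using assms unfolding tnn_def by blast
  have r0: "0 \<le> r" using tnn_nonneg[OF assms] .
  define n where "n = degree p"
  define F where "F = (\<Sum>i\<le>n. smult (coeff p i) ([:0,0,1:]^i * [:1,-1:]^(2*(n-i))))"
  have hF: "poly F z = (\<Sum>i\<le>n. coeff p i * (z^2)^i * ((1-z)^2)^(n-i))" for z
  proof -
    have a: "poly [:1,-1:] z = 1 - z" by simp
    have b: "poly [:0,0,1:] z = z^2" by (simp add: power2_eq_square)
    show ?thesis unfolding F_def poly_sum poly_smult poly_mult poly_power a b
      by (simp add: power_mult mult.assoc)
  qed
  have hF1: "poly F z = ((1-z)^2)^n * poly p (z^2/(1-z)^2)" if "z \<noteq> 1" for z
  proof -
    have nz: "(1-z)^2 \<noteq> 0" using that by simp
    have "poly p (z^2/(1-z)^2) = (\<Sum>i\<le>n. coeff p i * (z^2/(1-z)^2)^i)"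
      by (simp add: poly_altdef n_def)
    then have "((1-z)^2)^n * poly p (z^2/(1-z)^2) =
        (\<Sum>i\<le>n. coeff p i * (((1-z)^2)^n * (z^2/(1-z)^2)^i))"
      by (simp add: sum_distrib_left algebra_simps)
    also have "\<dots> = (\<Sum>i\<le>n. coeff p i * (z^2)^i * ((1-z)^2)^(n-i))"
    proof (intro sum.cong refl)
      fix i assume "i \<in> {..n}"
      then have "((1-z)^2)^n = ((1-z)^2)^i * ((1-z)^2)^(n-i)"
        by (simp add: power_add[symmetric])
      then show "coeff p i * (((1-z)^2)^n * (z^2/(1-z)^2)^i) = coeff p i * (z^2)^i * ((1-z)^2)^(n-i)"
        using nz by (simp add: power_divide field_simps)
    qed
    finally show ?thesis using hF by simp
  qed
  have hF2: "poly F 1 = coeff p n"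
  proof -
    have "poly F 1 = (\<Sum>i<Suc n. coeff p i * 0^(n-i))"
      unfolding hF lessThan_Suc_atMost by simp
    also have "\<dots> = (\<Sum>i<n. coeff p i * 0^(n-i)) + coeff p n"
      by simp
    also have "(\<Sum>i<n. coeff p i * (0::complex)^(n-i)) = 0"
      by (intro sum.neutral) auto
    finally show ?thesis by simp
  qed
  have F1: "poly F 1 \<noteq> 0" using hF2 p(1) by (simp add: n_def)
  then have Fnz: "F \<noteq> 0" by auto
  have ratF: "ratp F" unfolding F_def
    using p(2) by (intro ratp_sum ratp_smult ratp_mult ratp_power ratp_x2 ratp_lin) (auto simp: ratp_def)
  have Froots: "z \<in> \<real>" if "poly F z = 0" for z
  proof -
    have z1: "z \<noteq> 1" using that F1 by auto
    then have pz: "poly p (z^2/(1-z)^2) = 0" using that hF1[OF z1] by simp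
    define w where "w = z / (1 - z)"
    have w2: "w^2 = z^2/(1-z)^2" by (simp add: w_def power_divide)
    have "poly p (w^2) = 0" using pz w2 by simp
    then have "w^2 \<in> \<real> \<and> 0 \<le> Re (w^2)" using p(4) by blast
    then have "w \<in> \<real>" using complex_sq_real_nonneg by blast
    have "w * (1 - z) = z" using z1 by (simp add: w_def)
    then have eq: "w = z * (1 + w)" by (simp add: algebra_simps)
    have w1: "1 + w \<noteq> 0"
    proof
      assume "1 + w = 0"
      then have "w = 0" using eq by simp
      then show False using \<open>1 + w = 0\<close> by simp
    qed
    have "z = w / (1 + w)" using w1 eq by (simp add: eq_divide_eq)
    then show ?thesis using \<open>w \<in> \<real>\<close> by (simp add: Reals_divide Reals_add)
  qed
  obtain e g where eg: "ratp e" "ratp g" "\<forall>z. poly F z = poly e (z^2) + z * poly g (z^2)"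
    using even_odd_decomp[OF ratF] by blast
  define G where "G = e^2 - [:0,1:] * g^2"
  have hG: "poly G (z^2) = poly F z * poly F (-z)" for z
    using eg(3) by (simp add: G_def algebra_simps power2_eq_square)
  have "G \<noteq> 0"
  proof
    assume "G = 0"
    define H where "H = F * pcompose F [:0,-1:]"
    have "poly H z = 0" for z using hG[of z] \<open>G = 0\<close> by (simp add: H_def poly_pcompose)
    then have "H = 0" using poly_all_0_iff_0 by blast
    then show False using Fnz by (simp add: H_def pcompose_eq_0_iff)
  qed
  moreover have "ratp G" unfolding G_def
    using eg by (intro ratp_diff ratp_mult ratp_power ratp_lin) auto
  moreover have "poly G (complex_of_real (r / (1 + sqrt r)^2)) = 0"
  proof -
    define z0 where "z0 = sqrt r / (1 + sqrt r)"
    have pos: "1 + sqrt r > 0" using r0 by (smt (verit) real_sqrt_ge_zero)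
    have 1: "r / (1 + sqrt r)^2 = z0^2" using r0 by (simp add: z0_def power_divide)
    have z01: "z0 \<noteq> 1" using pos by (simp add: z0_def field_simps)
    have "1 - z0 = 1 / (1 + sqrt r)" using pos by (simp add: z0_def diff_divide_distrib[symmetric] divide_simps)
    then have "z0 / (1 - z0) = sqrt r" using pos by (simp add: z0_def)
    then have 2: "z0^2/(1-z0)^2 = r" using r0 by (metis power_divide real_sqrt_pow2)
    have "poly F (complex_of_real z0) = 0"
      using hF1[of "complex_of_real z0"] z01 p(3) 2
    proof -
      have "(complex_of_real z0)^2 / (1 - complex_of_real z0)^2 = complex_of_real (z0^2/(1-z0)^2)"
        by simp
      then have "(complex_of_real z0)^2 / (1 - complex_of_real z0)^2 = complex_of_real r"
        using 2 by simp
      moreover have "complex_of_real z0 \<noteq> 1" using z01 by (metis of_real_1 of_real_eq_iff)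
      ultimately show ?thesis using hF1[of "complex_of_real z0"] p(3) by simp
    qed
    then show ?thesis unfolding 1 using hG[of "complex_of_real z0"] by simp
  qed
  moreover have "c \<in> \<real> \<and> 0 \<le> Re c" if "poly G c = 0" for c
  proof -
    define z where "z = csqrt c"
    have zc: "z^2 = c" by (simp add: z_def)
    then have "poly F z = 0 \<or> poly F (-z) = 0" using hG[of z] that by simp
    then have "z \<in> \<real>" using Froots by (metis Reals_minus_iff)
    then obtain t where "z = complex_of_real t" by (auto elim: Reals_cases)
    then show ?thesis using zc by auto
  qed
  ultimately show ?thesis unfolding tnn_def by blast
qed



lemma complex_rat_real: "(c::complex) \<in> \<rat> \<Longrightarrow> \<exists>r::real. r \<in> \<rat> \<and> c = complex_of_real r"
proof -
  assume "c \<in> \<rat>"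
  then obtain q where "c = of_rat q" by (auto elim: Rats_cases)
  moreover have "(of_rat q :: complex) = complex_of_real (of_rat q)"
    by (cases q) (simp add: of_rat_rat)
  ultimately show ?thesis by auto
qed

lemma conj_eval:
  fixes A B d :: real
  assumes "ratp p" "A \<in> \<rat>" "B \<in> \<rat>" "d \<in> \<rat>" "0 \<le> d"
  shows "\<exists>U V. U \<in> \<rat> \<and> V \<in> \<rat> \<and>
    poly p (complex_of_real (A + B * sqrt d)) = complex_of_real (U + V * sqrt d) \<and>
    poly p (complex_of_real (A - B * sqrt d)) = complex_of_real (U - V * sqrt d)"
  using assms(1)
proof (induction p rule: pCons_induct)
  case 0
  then show ?case by (intro exI[of _ 0]) auto
next
  case (pCons c p)
  then have "c \<in> \<rat>" "ratp p" by (auto simp: ratp_pCons_iff)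
  then obtain c' where c': "c' \<in> \<rat>" "c = complex_of_real c'" using complex_rat_real by blast
  obtain U V where UV: "U \<in> \<rat>" "V \<in> \<rat>"
    "poly p (complex_of_real (A + B * sqrt d)) = complex_of_real (U + V * sqrt d)"
    "poly p (complex_of_real (A - B * sqrt d)) = complex_of_real (U - V * sqrt d)"
    using pCons.IH \<open>ratp p\<close> by blast
  have sd: "sqrt d * sqrt d = d" using assms(5) by simp
  have e1: "c' + (A + B * sqrt d) * (U + V * sqrt d) = (c' + A*U + B*V*d) + (A*V + B*U) * sqrt d"
    using sd by (simp add: algebra_simps)
  have e2: "c' + (A - B * sqrt d) * (U - V * sqrt d) = (c' + A*U + B*V*d) - (A*V + B*U) * sqrt d"
    using sd by (simp add: algebra_simps)
  have p1: "poly (pCons c p) (complex_of_real (A + B * sqrt d)) = complex_of_real (c' + (A + B * sqrt d) * (U + V * sqrt d))"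
    unfolding poly_pCons UV(3) c'(2) by (simp only: of_real_add of_real_mult)
  have p2: "poly (pCons c p) (complex_of_real (A - B * sqrt d)) = complex_of_real (c' + (A - B * sqrt d) * (U - V * sqrt d))"
    unfolding poly_pCons UV(4) c'(2) by (simp only: of_real_add of_real_mult)
  have r: "c' + A*U + B*V*d \<in> \<rat>" "A*V + B*U \<in> \<rat>"
    using UV c' assms by (auto intro!: Rats_add Rats_mult)
  show ?case
    apply (rule exI[of _ "c' + A*U + B*V*d"], rule exI[of _ "A*V + B*U"])
    using r p1 p2 e1 e2 by simp
qed

lemma conj_root:
  fixes A B d :: real
  assumes "ratp p" "A \<in> \<rat>" "B \<in> \<rat>" "d \<in> \<rat>" "0 \<le> d" "\<not> (\<exists>q\<in>\<rat>. d = q^2)"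
    and "poly p (complex_of_real (A + B * sqrt d)) = 0"
  shows "poly p (complex_of_real (A - B * sqrt d)) = 0"
proof -
  obtain U V where UV: "U \<in> \<rat>" "V \<in> \<rat>"
    "poly p (complex_of_real (A + B * sqrt d)) = complex_of_real (U + V * sqrt d)"
    "poly p (complex_of_real (A - B * sqrt d)) = complex_of_real (U - V * sqrt d)"
    using conj_eval[OF assms(1-5)] by blast
  have 0: "U + V * sqrt d = 0" using UV(3) assms(7) by (metis of_real_eq_0_iff)
  have "V = 0"
  proof (rule ccontr)
    assume "V \<noteq> 0"
    then have "sqrt d = - U / V" using 0 by (simp add: field_simps)
    then have "sqrt d \<in> \<rat>" using UV by simp
    moreover have "d = (sqrt d)^2" using assms(5) by simp
    ultimately show False using assms(6) by blast
  qed
  then have "U = 0" using 0 by simp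
  then show ?thesis using UV(4) \<open>V = 0\<close> by simp
qed



lemma sgnsq_alt: "sgnsq x = x * \<bar>x\<bar>"
  by (simp add: sgnsq_def power2_eq_square sgn_real_def abs_real_def)

lemma sgnsq_strict_mono: "strict_mono sgnsq"
proof (rule strict_monoI)
  fix x y :: real assume "x < y"
  then show "sgnsq x < sgnsq y" unfolding sgnsq_alt
    by (cases "0 \<le> x"; cases "0 \<le> y") (auto simp: mult_strict_mono' mult_less_cancel_left1 mult_strict_mono
        intro: mult_strict_mono, (smt (verit) mult_less_cancel_left mult_less_cancel_right mult_nonneg_nonneg mult_nonpos_nonpos)+)
qed

lemma inv_sgnsq: "inv sgnsq y = sgn y * sqrt \<bar>y\<bar>"
proof -
  have "inj sgnsq" using sgnsq_strict_mono strict_mono_imp_inj_on by blast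
  moreover have "sgnsq (sgn y * sqrt \<bar>y\<bar>) = y"
    unfolding sgnsq_alt by (cases "y \<ge> 0") (auto simp: abs_mult sgn_real_def)
  ultimately show ?thesis by (metis inv_f_f)
qed

lemma sgnsq_0 [simp]: "sgnsq 0 = 0" by (simp add: sgnsq_def)

lemma sgnsq_nz: "x \<noteq> 0 \<Longrightarrow> sgnsq x \<noteq> 0" by (simp add: sgnsq_alt)

definition Iox :: "pt \<Rightarrow> bool" where
  "Iox p \<longleftrightarrow> (fst p = 0 \<and> snd p = 0) \<or>
     (fst p \<noteq> 0 \<and> tnn (snd p / sgnsq (fst p)) \<and>
       (1 \<le> snd p / sgnsq (fst p) \<longrightarrow> tnn (snd p / sgnsq (fst p) - 1)))"

lemma h_step:
  assumes "Iox (X, Y)"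
  shows "Iox (h_sigma sgnsq (X, Y))"
proof (cases "X = 0")
  case True
  then have "Y = 0" using assms by (simp add: Iox_def)
  then show ?thesis using True by (simp add: Iox_def h_sigma_def inv_sgnsq)
next
  case False
  define r where "r = Y / sgnsq X"
  have tr: "tnn r" using assms False by (simp add: Iox_def r_def)
  have r0: "0 \<le> r" using tnn_nonneg[OF tr] .
  have Y: "Y = r * sgnsq X" using False sgnsq_nz[OF False] by (simp add: r_def)
  have inv: "inv sgnsq Y = sqrt r * X"
  proof (cases "r = 0")
    case True then show ?thesis using Y by (simp add: inv_sgnsq)
  next
    case rn: False
    then have rp: "r > 0" using r0 by simp
    have "sgn Y = sgn X" using Y rp False by (simp add: sgnsq_alt sgn_mult)
    moreover have "\<bar>Y\<bar> = r * X^2" using Y rp by (simp add: sgnsq_alt abs_mult power2_eq_square)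
    moreover have "sqrt (r * X^2) = sqrt r * \<bar>X\<bar>" by (simp add: real_sqrt_mult)
    moreover have "\<bar>X\<bar> * sgn X = X" by (metis mult.commute sgn_mult_abs)
    ultimately show ?thesis by (simp add: inv_sgnsq sgn_mult_abs)
  qed
  define s where "s = 1 + sqrt r"
  have s0: "s > 0" using r0 by (simp add: s_def add_pos_nonneg)
  have X': "X + inv sgnsq Y = X * s" by (simp add: inv s_def algebra_simps)
  have Xs: "X * s \<noteq> 0" using False s0 by simp
  have sq: "sgnsq (X * s) = sgnsq X * s^2"
    using s0 by (simp add: sgnsq_def sgn_mult power_mult_distrib)
  have ratio: "Y / sgnsq (X * s) = r / (1 + sqrt r)^2"
  proof -
    have "Y / sgnsq (X * s) = (r * sgnsq X) / (sgnsq X * s^2)" using Y sq by simp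
    also have "\<dots> = r / s^2" using sgnsq_nz[OF False] by simp
    finally show ?thesis by (simp add: s_def)
  qed
  have lt: "r / (1 + sqrt r)^2 < 1"
  proof -
    have "r = (sqrt r)^2" using r0 by simp
    also have "\<dots> < (1 + sqrt r)^2" using r0 by (intro power_strict_mono) auto
    finally have "r < (1 + sqrt r)^2" .
    moreover have "(1 + sqrt r)^2 > 0" using s0 by (simp add: s_def)
    ultimately show ?thesis by (simp add: divide_less_eq)
  qed
  show ?thesis
    unfolding h_sigma_def using X' Xs ratio lt tnn_h[OF tr]
    by (simp add: Iox_def)
qed

lemma v_step:
  assumes "Iox (X, Y)"
  shows "Iox (v_sigma sgnsq (X, Y))"
proof (cases "X = 0")
  case True
  then have "Y = 0" using assms by (simp add: Iox_def)
  then show ?thesis using True by (simp add: Iox_def v_sigma_def)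
next
  case False
  define r where "r = Y / sgnsq X"
  have tr: "tnn r" using assms False by (simp add: Iox_def r_def)
  have "(sgnsq X + Y) / sgnsq X = r + 1"
    using sgnsq_nz[OF False] by (simp add: r_def field_simps)
  then show ?thesis using False tr tnn_plus1[OF tr]
    by (simp add: Iox_def v_sigma_def)
qed

lemma Iox_monoid:
  assumes "m \<in> monoid_gen (h_sigma sgnsq) (v_sigma sgnsq)"
  shows "Iox (m (t, 0))"
  using assms
proof induction
  case id_in
  then show ?case by (cases "t = 0") (auto simp: Iox_def tnn_0)
next
  case (f_step m)
  then show ?case using h_step by (metis comp_apply surj_pair)
next
  case (g_step m)
  then show ?case using v_step by (metis comp_apply surj_pair)
qed

lemma Ioy_monoid:
  assumes "m \<in> monoid_gen (h_sigma_inv sgnsq) (v_sigma_inv sgnsq)"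
  shows "fst (m (0, t)) * snd (m (0, t)) \<le> 0"
  using assms
proof induction
  case id_in
  then show ?case by simp
next
  case (f_step m)
  obtain X Y where XY: "m (0, t) = (X, Y)" by (metis surj_pair)
  have "inv sgnsq Y * Y \<ge> 0"
    by (simp add: inv_sgnsq) (metis abs_ge_zero mult.commute mult.left_commute real_sqrt_ge_zero sgn_mult_abs zero_le_mult_iff abs_mult_self_eq sgn_abs)
  then show ?case using f_step XY by (simp add: h_sigma_inv_def algebra_simps)
next
  case (g_step m)
  obtain X Y where XY: "m (0, t) = (X, Y)" by (metis surj_pair)
  have "X * sgnsq X \<ge> 0" by (simp add: sgnsq_alt mult.assoc[symmetric])
  then show ?case using g_step XY by (simp add: v_sigma_inv_def algebra_simps)
qed



lemma two_not_rat_square: "\<not> (\<exists>q\<in>\<rat>. (2::real) = q^2)"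
proof
  assume "\<exists>q\<in>\<rat>. (2::real) = q^2"
  then obtain q :: real where q: "q \<in> \<rat>" "2 = q^2" by blast
  obtain m n :: nat where mn: "n \<noteq> 0" "\<bar>q\<bar> = real m / real n" "coprime m n"
    using Rats_abs_nat_div_natE[OF q(1)] by blast
  have "2 = \<bar>q\<bar>^2" using q(2) by simp
  then have "2 = (real m / real n)^2" using mn(2) by simp
  then have "2 * (real n)^2 = (real m)^2" using mn(1) by (simp add: field_simps)
  then have "real (2 * n^2) = real (m^2)" by simp
  then have e: "2 * n^2 = m^2" by (simp only: of_nat_eq_iff)
  then have "even (m^2)" by (simp add: dvd_def) (metis)
  then have "even m" by simp
  then obtain k where k: "m = 2 * k" by blast
  then have "2 * n^2 = 4 * k^2" using e by (simp add: power_mult_distrib)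
  then have "n^2 = 2 * k^2" by simp
  then have "even (n^2)" by simp
  then have "even n" by simp
  have "is_unit (2::nat)" using coprime_common_divisor[OF mn(3) \<open>even m\<close> \<open>even n\<close>] .
  then show False by simp
qed

lemma key:
  fixes x0 y0 a0 b0 :: real
  assumes "x0 > 0" and "y0 > 0"
    and "y0 \<in> \<rat>" and nsq: "\<not> (\<exists>q \<in> \<rat>. y0 = q ^ 2)"
    and "a0 \<in> \<rat>" and "b0 \<in> \<rat>" and "a0 \<noteq> 0" and "\<bar>b0\<bar> \<ge> 1"
    and x0: "x0 = a0 + b0 * sqrt y0"
    and "y0 > x0 ^ 2"
  shows "\<not> Iox (x0, y0)"
proof
  assume I: "Iox (x0, y0)"
  define s where "s = sqrt y0"
  have s0: "s > 0" using assms(2) by (simp add: s_def)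
  have ss: "s^2 = y0" using assms(2) by (simp add: s_def)
  have xs: "x0 < s" unfolding s_def using assms(10) by (intro real_less_rsqrt)
  define N where "N = a0^2 - b0^2 * y0"
  have b0: "b0 \<noteq> 0" using assms(8) by auto
  have N0: "N \<noteq> 0"
  proof
    assume "N = 0"
    then have "y0 = (a0/b0)^2" using b0 by (simp add: N_def field_simps power_divide)
    moreover have "a0/b0 \<in> \<rat>" using assms(5,6) by simp
    ultimately show False using nsq by blast
  qed
  have "x0 * (a0 - b0 * s) = a0^2 - b0^2 * s^2"
    unfolding x0 s_def[symmetric] by (simp add: algebra_simps power2_eq_square)
  then have Nx: "N = x0 * (a0 - b0 * s)" unfolding N_def ss by simp
  have sg: "sgnsq x0 = x0^2" using assms(1) by (simp add: sgnsq_def)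
  define \<rho> where "\<rho> = y0 / x0^2"
  have rho1: "1 \<le> \<rho>" using assms(10) assms(1) by (simp add: \<rho>_def)
  have "tnn (\<rho> - 1)" using I assms(1) rho1 by (simp add: Iox_def sg \<rho>_def)
  then obtain p where p: "p \<noteq> 0" "ratp p" "poly p (complex_of_real (\<rho> - 1)) = 0"
    "\<forall>c. poly p c = 0 \<longrightarrow> c \<in> \<real> \<and> 0 \<le> Re c"
    unfolding tnn_def by blast
  define P where "P = a0^2 + b0^2 * y0"
  define Q where "Q = 2 * a0 * b0"
  define A where "A = y0 * P / N^2 - 1"
  define B where "B = - (Q * y0) / N^2"
  have AQ: "A \<in> \<rat>" "B \<in> \<rat>" unfolding A_def B_def N_def P_def Q_def using assms(3,5,6)
    by (auto intro!: Rats_add Rats_mult Rats_divide Rats_power Rats_diff)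
  have sss: "s * s = y0" using ss by (simp add: power2_eq_square)
  have sqa: "(a0 - b0 * s)^2 = P - Q * s"
    unfolding P_def Q_def by (simp add: power2_eq_square algebra_simps sss[symmetric])
  have sqp: "(a0 + b0 * s)^2 = P + Q * s"
    unfolding P_def Q_def by (simp add: power2_eq_square algebra_simps sss[symmetric])
  have N2: "N^2 = x0^2 * (a0 - b0 * s)^2" using Nx by (simp add: power_mult_distrib)
  have rho_eq: "\<rho> = y0 * (a0 - b0 * s)^2 / N^2"
  proof -
    have ab0: "a0 - b0 * s \<noteq> 0" using Nx N0 by auto
    then show ?thesis using N2 assms(1) by (simp add: \<rho>_def field_simps)
  qed
  have l1: "y0 * (P - Q * s) / N^2 - 1 = (y0 * P / N^2 - 1) + (- (Q * y0) / N^2) * s"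
    by (simp add: right_diff_distrib diff_divide_distrib algebra_simps)
  have l2: "y0 * (P + Q * s) / N^2 - 1 = (y0 * P / N^2 - 1) - (- (Q * y0) / N^2) * s"
    by (simp add: right_diff_distrib diff_divide_distrib algebra_simps add_divide_distrib)
  have AB: "\<rho> - 1 = A + B * s"
    unfolding rho_eq sqa A_def B_def l1 ..
  have AmB: "A - B * s = y0 * x0^2 / N^2 - 1"
  proof -
    have x0s: "x0 = a0 + b0 * s" using x0 by (simp add: s_def)
    show ?thesis unfolding x0s A_def B_def sqp l2 ..
  qed
  have big: "y0 < (a0 - b0 * s)^2"
  proof -
    have e: "a0 - b0 * s = x0 - 2 * b0 * s" using x0 by (simp add: s_def)
    have "s < \<bar>a0 - b0 * s\<bar>"
    proof (cases "b0 \<ge> 1")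
      case True
      then have "2 * s \<le> 2 * b0 * s" using s0 by simp
      then have "x0 - 2 * b0 * s < - s" using xs by simp
      then show ?thesis using e s0 by simp
    next
      case False
      then have "b0 \<le> -1" using assms(8) by auto
      then have "1 * s \<le> (- b0) * s" using s0 by (intro mult_right_mono) auto
      then have "s \<le> - (b0 * s)" by simp
      then have "x0 - 2 * b0 * s > s" using assms(1) s0 by linarith
      then show ?thesis using e s0 by simp
    qed
    then have "s^2 < \<bar>a0 - b0 * s\<bar>^2" using s0 by (intro power_strict_mono) auto
    then show ?thesis using ss by simp
  qed
  have "A - B * s < 0"
  proof -
    have "y0 * x0^2 < N^2" unfolding N2 using big assms(1)
      by (simp add: mult.commute)
    then show ?thesis unfolding AmB using N0 by (simp add: divide_less_eq)
  qed
  moreover have "poly p (complex_of_real (A - B * sqrt y0)) = 0"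
    using conj_root[OF p(2) AQ assms(3) _ nsq] assms(2) p(3) AB by (simp add: s_def)
  then have "0 \<le> Re (complex_of_real (A - B * sqrt y0))" using p(4) by blast
  ultimately show False by (simp add: s_def)
qed

lemma general:
  fixes x0 y0 a0 b0 :: real
  assumes "x0 > 0" and "y0 > 0"
    and "y0 \<in> \<rat>" and "\<not> (\<exists>q \<in> \<rat>. y0 = q ^ 2)"
    and "a0 \<in> \<rat>" and "b0 \<in> \<rat>" and "a0 \<noteq> 0" and "\<bar>b0\<bar> \<ge> 1"
    and "x0 = a0 + b0 * sqrt y0"
    and "y0 > x0 ^ 2"
  shows "sigma_irrational sgnsq (x0, y0)"
  unfolding sigma_irrational_def sigma_rational_lines_def
proof (intro ballI)
  have nI: "\<not> Iox (x0, y0)" using key[OF assms] .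
  fix L assume "L \<in> {Ox, Oy} \<union> {m ` Ox |m. m \<in> monoid_gen (h_sigma sgnsq) (v_sigma sgnsq)} \<union>
          {m ` Oy |m. m \<in> monoid_gen (h_sigma_inv sgnsq) (v_sigma_inv sgnsq)}"
  then consider "L = Ox" | "L = Oy"
    | m where "m \<in> monoid_gen (h_sigma sgnsq) (v_sigma sgnsq)" "L = m ` Ox"
    | m where "m \<in> monoid_gen (h_sigma_inv sgnsq) (v_sigma_inv sgnsq)" "L = m ` Oy"
    by blast
  then show "(x0, y0) \<notin> L"
  proof cases
    case 1 then show ?thesis using assms(2) by (simp add: Ox_def)
  next
    case 2 then show ?thesis using assms(1) by (simp add: Oy_def)
  next
    case 3
    show ?thesis
    proof
      assume "(x0, y0) \<in> L"
      then obtain t where e: "m (t, 0) = (x0, y0)" using 3 by (auto simp: Ox_def)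
      have "Iox (m (t, 0))" using Iox_monoid[OF 3(1)] .
      then show False using nI unfolding e by blast
    qed
  next
    case 4
    show ?thesis
    proof
      assume "(x0, y0) \<in> L"
      then obtain t where e: "m (0, t) = (x0, y0)" using 4 by (auto simp: Oy_def)
      have "fst (m (0, t)) * snd (m (0, t)) \<le> 0" using Ioy_monoid[OF 4(1)] .
      then have "x0 * y0 \<le> 0" unfolding e by simp
      then show False using mult_pos_pos[OF assms(1,2)] by linarith
    qed
  qed
qed

theorem lemma7:
  fixes x0 y0 a0 b0 :: real
  assumes "x0 > 0" and "y0 > 0"
    and "y0 \<in> \<rat>" and "\<not> (\<exists>q \<in> \<rat>. y0 = q ^ 2)"
    and "a0 \<in> \<rat>" and "b0 \<in> \<rat>" and "a0 \<noteq> 0" and "\<bar>b0\<bar> \<ge> 1"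
    and "x0 = a0 + b0 * sqrt y0"
    and "y0 > x0 ^ 2"
  shows "sigma_irrational sgnsq (x0, y0) \<and> sigma_irrational sgnsq (-1 + sqrt 2, 2)"
proof
  show "sigma_irrational sgnsq (x0, y0)" using general[OF assms] .
  have s1: "1 < sqrt (2::real)" by simp
  have s2: "sqrt (2::real) * sqrt 2 = 2" by simp
  have "(-1 + sqrt (2::real))^2 = 3 - 2 * sqrt 2" using s2 by (simp add: power2_eq_square algebra_simps)
  moreover have "1 < 2 * sqrt (2::real)" using s1 by linarith
  ultimately have lt: "(-1 + sqrt (2::real))^2 < 2" by linarith
  show "sigma_irrational sgnsq (-1 + sqrt 2, 2)"
  proof -
    have h1: "0 < -1 + sqrt (2::real)" using s1 by simp
    have h2: "(2::real) \<in> \<rat>" by simp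
    have h3: "(-1::real) \<in> \<rat>" "(1::real) \<in> \<rat>" by simp_all
    have h4: "-1 + sqrt 2 = -1 + 1 * sqrt (2::real)" by simp
    have h5: "(0::real) < 2" "(-1::real) \<noteq> 0" "1 \<le> \<bar>1::real\<bar>" by simp_all
    show ?thesis by (rule general[OF h1 h5(1) h2 two_not_rat_square h3(1) h3(2) h5(2) h5(3) h4 lt])
  qed
qed


end
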